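(* In the transaction packaging game described in the context, let $\sigma^*$ be a mixed strategy. Suppose there exists $w\in\mathbb{R}$ such that for every $\mathsf{tx}\in M$: if $p^{\sigma^*}(\mathsf{tx})=0$ then $v(\mathsf{tx})\exp(-\lambda p^{\sigma^*}(\mathsf{tx}))\le w$; if $0<p^{\sigma^*}(\mathsf{tx})<1$ then $v(\mathsf{tx})\exp(-\lambda p^{\sigma^*}(\mathsf{tx}))=w$; and if $p^{\sigma^*}(\mathsf{tx})=1$ then $v(\mathsf{tx})\exp(-\lambda p^{\sigma^*}(\mathsf{tx}))\ge w$. Then $\sigma^*$ is an equilibrium strategy.
   Context: Transaction packaging game. Fix a positive integer $k$ (block capacity), a real $\lambda>0$ (network latency parameter), a finite set $M$ (the mempool) of transactions with $|M|\ge k$, and a gas price function $v:M\to(0,\infty)$. Miners are indexed by $i\in[0,1]$. A pure strategy of a miner is a subset $D\subseteq M$ with $|D|=k$; let $\mathcal{S}$ be the set of such subsets. A mixed strategy is a probability distribution $\sigma$ on $\mathcal{S}$, and its marginal probability is $p^\sigma(\mathsf{tx})=\sum_{D\in\mathcal{S}}\sigma(D)\mathbf{1}[\mathsf{tx}\in D]$. Conditional on miner $i$ mining a block $B_i$ (drawn from her mixed strategy $\sigma_i$), the number $\gamma$ of other blocks mined is distributed as $\mathrm{Poisson}(\lambda)$; they are mined by miners chosen independently and uniformly at random from $[0,1]$, each such miner $j$ producing a block $B_j$ drawn independently from her mixed strategy $\sigma_j$. The utility of miner $i$ is $u_i(\sigma_i,\sigma_{-i})=\sum_{\mathsf{tx}\in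 M}p^{\sigma_i}(\mathsf{tx})\,v(\mathsf{tx})\,\Pr[\text{no other mined block }B_j\ (j\neq i)\text{ contains }\mathsf{tx}]$. A mixed strategy $\sigma^*$ is an equilibrium strategy if for every $i\in[0,1]$ and every mixed strategy $\sigma$, $u_i(\sigma,\sigma^*_{-i})\le u_i(\sigma^*,\sigma^*_{-i})$, where $\sigma^*_{-i}$ denotes the profile in which all miners other than $i$ use $\sigma^*$. *)

theory Defs
  imports Complex_Main
begin

definition pure_strategies :: "'a set \<Rightarrow> nat \<Rightarrow> 'a set set" where
  "pure_strategies M k = {D. D \<subseteq> M \<and> card D = k}"

definition mixed_strategy :: "'a set \<Rightarrow> nat \<Rightarrow> ('a set \<Rightarrow> real) \<Rightarrow> bool" where
  "mixed_strategy M k \<sigma> \<longleftrightarrow>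
     (\<forall>D. 0 \<le> \<sigma> D) \<and> (\<forall>D. D \<notin> pure_strategies M k \<longrightarrow> \<sigma> D = 0) \<and>
     (\<Sum>D\<in>pure_strategies M k. \<sigma> D) = 1"

definition marginal :: "'a set \<Rightarrow> nat \<Rightarrow> ('a set \<Rightarrow> real) \<Rightarrow> 'a \<Rightarrow> real" where
  "marginal M k \<sigma> tx = (\<Sum>D\<in>pure_strategies M k. \<sigma> D * (if tx \<in> D then 1 else 0))"

text \<open>Probability that no other mined block contains tx, when all other miners
  use \<sigma>: the number of other blocks is Poisson(lam), and each of them is drawn
  independently from \<sigma> (the miner producing it is uniform on [0,1]; the
  event that it is miner i itself has probability zero).\<close>
definition no_other_prob :: "'a set \<Rightarrow> nat \<Rightarrow> real \<Rightarrow> ('a set \<Rightarrow> real) \<Rightarrow> 'a \<Rightarrow> real" where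
  "no_other_prob M k lam \<sigma> tx =
     (\<Sum>n. (exp (-lam) * lam ^ n / fact n) *
            (\<Sum>D\<in>pure_strategies M k. \<sigma> D * (if tx \<in> D then 0 else 1)) ^ n)"

text \<open>Utility of a miner i playing \<sigma> while all other miners play \<sigma>'
  (independent of the index i).\<close>
definition utility ::
  "'a set \<Rightarrow> nat \<Rightarrow> real \<Rightarrow> ('a \<Rightarrow> real) \<Rightarrow> ('a set \<Rightarrow> real) \<Rightarrow> ('a set \<Rightarrow> real) \<Rightarrow> real" where
  "utility M k lam v \<sigma> \<sigma>' = (\<Sum>tx\<in>M. marginal M k \<sigma> tx * v tx * no_other_prob M k lam \<sigma>' tx)"

definition equilibrium_strategy ::
  "'a set \<Rightarrow> nat \<Rightarrow> real \<Rightarrow> ('a \<Rightarrow> real) \<Rightarrow> ('a set \<Rightarrow> real) \<Rightarrow> bool" where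
  "equilibrium_strategy M k lam v \<sigma>s \<longleftrightarrow>
     mixed_strategy M k \<sigma>s \<and>
     (\<forall>i::real. 0 \<le> i \<and> i \<le> 1 \<longrightarrow>
        (\<forall>\<sigma>. mixed_strategy M k \<sigma> \<longrightarrow> utility M k lam v \<sigma> \<sigma>s \<le> utility M k lam v \<sigma>s \<sigma>s))"

end

theory Submission
  imports Defs
begin

lemma fin_ps: "finite M \<Longrightarrow> finite (pure_strategies M k)"
  unfolding pure_strategies_def by (rule finite_subset[of _ "Pow M"]) auto

lemma marg_bounds:
  assumes "mixed_strategy M k \<sigma>" "finite M"
  shows "0 \<le> marginal M k \<sigma> tx \<and> marginal M k \<sigma> tx \<le> 1"
proof
  show "0 \<le> marginal M k \<sigma> tx" using assms unfolding marginal_def mixed_strategy_def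
    by (intro sum_nonneg) auto
  have "marginal M k \<sigma> tx \<le> (\<Sum>D\<in>pure_strategies M k. \<sigma> D)" unfolding marginal_def
    using assms unfolding mixed_strategy_def by (intro sum_mono) auto
  then show "marginal M k \<sigma> tx \<le> 1" using assms unfolding mixed_strategy_def by simp
qed

lemma sum_marg:
  assumes "mixed_strategy M k \<sigma>" "finite M"
  shows "(\<Sum>tx\<in>M. marginal M k \<sigma> tx) = real k"
proof -
  have "(\<Sum>tx\<in>M. marginal M k \<sigma> tx)
      = (\<Sum>D\<in>pure_strategies M k. \<Sum>tx\<in>M. \<sigma> D * (if tx \<in> D then 1 else 0))"
    unfolding marginal_def by (rule sum.swap)
  also have "\<dots> = (\<Sum>D\<in>pure_strategies M k. \<sigma> D * real k)"
  proof (rule sum.cong)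
    fix D assume D: "D \<in> pure_strategies M k"
    have "(\<Sum>tx\<in>M. \<sigma> D * (if tx \<in> D then 1 else 0)) = \<sigma> D * (\<Sum>tx\<in>M. (if tx \<in> D then 1 else 0))"
      by (simp add: sum_distrib_left)
    also have "(\<Sum>tx\<in>M. (if tx \<in> D then 1 else 0::real)) = real (card (M \<inter> D))"
      using assms(2) by (simp add: sum.If_cases)
    also have "M \<inter> D = D" using D unfolding pure_strategies_def by auto
    finally show "(\<Sum>tx\<in>M. \<sigma> D * (if tx \<in> D then 1 else 0)) = \<sigma> D * real k"
      using D unfolding pure_strategies_def by simp
  qed simp
  also have "\<dots> = real k" using assms unfolding mixed_strategy_def
    by (simp add: sum_distrib_right[symmetric])
  finally show ?thesis .
qed

lemma nop:
  assumes "mixed_strategy M k \<sigma>" "finite M"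
  shows "no_other_prob M k lam \<sigma> tx = exp (-lam * marginal M k \<sigma> tx)"
proof -
  define q where "q = (\<Sum>D\<in>pure_strategies M k. \<sigma> D * (if tx \<in> D then 0 else 1))"
  have "q = (\<Sum>D\<in>pure_strategies M k. \<sigma> D - \<sigma> D * (if tx \<in> D then 1 else 0))"
    unfolding q_def by (intro sum.cong) auto
  also have "\<dots> = 1 - marginal M k \<sigma> tx"
    using assms unfolding marginal_def mixed_strategy_def by (simp add: sum_subtractf)
  finally have q: "q = 1 - marginal M k \<sigma> tx" .
  have "(\<lambda>n. (lam * q) ^ n /\<^sub>R fact n) sums exp (lam * q)" by (rule exp_converges)
  then have "(\<lambda>n. exp (-lam) * ((lam * q) ^ n / fact n)) sums (exp (-lam) * exp (lam * q))"
    by (intro sums_mult) (simp add: divide_inverse mult.commute)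
  then have "(\<lambda>n. (exp (-lam) * lam ^ n / fact n) * q ^ n) sums (exp (-lam) * exp (lam * q))"
    by (simp add: power_mult_distrib mult.assoc)
  then have "no_other_prob M k lam \<sigma> tx = exp (-lam) * exp (lam * q)"
    unfolding no_other_prob_def q_def by (rule sums_unique[symmetric])
  also have "\<dots> = exp (-lam * marginal M k \<sigma> tx)"
    by (simp add: q exp_add[symmetric] algebra_simps)
  finally show ?thesis .
qed

theorem lemma3p2:
  fixes M :: "'a set" and k :: nat and lam :: real and v :: "'a \<Rightarrow> real"
    and \<sigma>s :: "'a set \<Rightarrow> real" and w :: real
  assumes "0 < k" and "0 < lam" and "finite M" and "k \<le> card M"
    and "\<forall>tx\<in>M. 0 < v tx"
    and "mixed_strategy M k \<sigma>s"
    and "\<forall>tx\<in>M. marginal M k \<sigma>s tx = 0 \<longrightarrow>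
                 v tx * exp (-lam * marginal M k \<sigma>s tx) \<le> w"
    and "\<forall>tx\<in>M. 0 < marginal M k \<sigma>s tx \<and> marginal M k \<sigma>s tx < 1 \<longrightarrow>
                 v tx * exp (-lam * marginal M k \<sigma>s tx) = w"
    and "\<forall>tx\<in>M. marginal M k \<sigma>s tx = 1 \<longrightarrow>
                 v tx * exp (-lam * marginal M k \<sigma>s tx) \<ge> w"
  shows "equilibrium_strategy M k lam v \<sigma>s"
proof -
  define a where "a tx = v tx * exp (-lam * marginal M k \<sigma>s tx)" for tx
  have U: "utility M k lam v \<sigma> \<sigma>s = (\<Sum>tx\<in>M. marginal M k \<sigma> tx * a tx)" for \<sigma>
    unfolding utility_def a_def using nop[OF assms(6,3)] by (simp add: mult.assoc)
  have main: "utility M k lam v \<sigma> \<sigma>s \<le> utility M k lam v \<sigma>s \<sigma>s"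
    if ms: "mixed_strategy M k \<sigma>" for \<sigma>
  proof -
    let ?p = "marginal M k \<sigma>" and ?ps = "marginal M k \<sigma>s"
    have tm: "(?p tx - ?ps tx) * (a tx - w) \<le> 0" if tx: "tx \<in> M" for tx
    proof -
      have b1: "0 \<le> ?p tx" "?p tx \<le> 1" using marg_bounds[OF ms assms(3)] by auto
      have b2: "0 \<le> ?ps tx" "?ps tx \<le> 1" using marg_bounds[OF assms(6,3)] by auto
      consider "?ps tx = 0" | "0 < ?ps tx \<and> ?ps tx < 1" | "?ps tx = 1" using b2 by linarith
      then show ?thesis
      proof cases
        case 1
        then have "a tx \<le> w" using assms(7) tx unfolding a_def by auto
        then show ?thesis using 1 b1 by (simp add: mult_nonneg_nonpos)
      next
        case 2
        then have "a tx = w" using assms(8) tx unfolding a_def by auto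
        then show ?thesis by simp
      next
        case 3
        then have "a tx \<ge> w" using assms(9) tx unfolding a_def by auto
        then show ?thesis using 3 b1 by (simp add: mult_nonpos_nonneg)
      qed
    qed
    have "(\<Sum>tx\<in>M. (?p tx - ?ps tx) * (a tx - w)) \<le> 0"
      using tm by (intro sum_nonpos) auto
    moreover have "(\<Sum>tx\<in>M. (?p tx - ?ps tx) * (a tx - w))
       = (\<Sum>tx\<in>M. ?p tx * a tx) - (\<Sum>tx\<in>M. ?ps tx * a tx)
         - w * ((\<Sum>tx\<in>M. ?p tx) - (\<Sum>tx\<in>M. ?ps tx))"
      by (simp add: sum_subtractf sum_distrib_left left_diff_distrib right_diff_distrib mult.commute)
    moreover have "(\<Sum>tx\<in>M. ?p tx) - (\<Sum>tx\<in>M. ?ps tx) = 0"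
      using sum_marg[OF ms assms(3)] sum_marg[OF assms(6,3)] by simp
    ultimately show ?thesis unfolding U by simp
  qed
  show ?thesis unfolding equilibrium_strategy_def using assms(6) main by blast
qed

end
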